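(* Let $A,B\subset\mathbb{R}$ be sets of positive Lebesgue measure. Then $(A\times B)+S^1$ contains an annulus of radius $1$, i.e. a set of the form $\{x\in\mathbb{R}^2: 1-\varepsilon<|x-p|<1+\varepsilon\}$ for some $p\in\mathbb{R}^2$ and $\varepsilon>0$.
   Context: $S^1=\{x\in\mathbb{R}^2:|x|=1\}$ is the Euclidean unit circle and $X+Y=\{x+y:x\in X,y\in Y\}$. *)

theory Defs
  imports "HOL-Analysis.Analysis"
begin

end

theory Submission
  imports Defs
begin

lemma image_bound_inj:
  fixes g g' :: "real \<Rightarrow> real"
  assumes S: "S \<in> lmeasurable"
    and der: "\<And>t. t\<in>S \<Longrightarrow> (g has_field_derivative g' t) (at t within S)"
    and inj: "inj_on g S" and bd: "\<And>t. t\<in>S \<Longrightarrow> \<bar>g' t\<bar> \<le> K"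
    and cont: "continuous_on S g'"
  shows "g ` S \<in> lmeasurable \<and> measure lebesgue (g ` S) \<le> K * measure lebesgue S"
proof -
  have Sl: "S \<in> sets lebesgue" using S by (simp add: fmeasurableD)
  have ci: "(\<lambda>x. K) integrable_on S"
    using S lmeasurable_iff_integrable_on integrable_on_cmult_left[of "\<lambda>x. 1" S K] by (simp add: integrable_on_const)
  have ai: "(\<lambda>t. \<bar>g' t\<bar> * 1) absolutely_integrable_on S"
    apply (rule measurable_bounded_by_integrable_imp_absolutely_integrable[OF _ Sl ci])
    using bd by (auto intro!: continuous_imp_measurable_on_sets_lebesgue continuous_intros cont Sl)
  let ?b = "integral S (\<lambda>t. \<bar>g' t\<bar> * 1)"
  have "(\<lambda>x. 1::real) absolutely_integrable_on (g ` S) \<and> integral (g ` S) (\<lambda>x. 1) = ?b"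
    using has_absolute_integral_change_of_variables_1'[OF Sl der inj, of "\<lambda>x. 1" ?b] ai by blast
  then have gS: "g ` S \<in> lmeasurable" and m: "measure lebesgue (g ` S) = ?b"
    using lmeasurable_iff_integrable_on lmeasure_integral absolutely_integrable_on_def by metis+
  have "?b \<le> integral S (\<lambda>x. K)"
    apply (rule integral_le)
    using ai ci bd absolutely_integrable_on_def by auto
  also have "\<dots> = K * measure lebesgue S"
    using lmeasure_integral[OF S] integral_mult_right[of S K "\<lambda>x. 1"] by simp
  finally show ?thesis using gS m by simp
qed

lemma sq_image_bound:
  fixes S :: "real set" and c k \<sigma> M :: real
  assumes S: "S \<in> sets lebesgue" and sub: "S \<subseteq> {c-M..c+M}" and \<sigma>: "\<sigma> = 1 \<or> \<sigma> = -1"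
  shows "\<exists>T. T \<in> lmeasurable \<and> (\<lambda>t. k + \<sigma>*(c-t)^2) ` S \<subseteq> T \<and> measure lebesgue T \<le> 2*M*measure lebesgue S"
proof -
  let ?g = "\<lambda>t. k + \<sigma>*(c-t)^2"
  let ?g' = "\<lambda>t. \<sigma>*(-2*(c-t))"
  define S1 where "S1 = S \<inter> {..c}"
  define S2 where "S2 = S \<inter> {c<..}"
  have bS: "bounded S" using sub bounded_subset bounded_closed_interval by blast
  have S1m: "S1 \<in> lmeasurable" unfolding S1_def
    by (rule bounded_set_imp_lmeasurable) (use bS S bounded_subset in auto)
  have S2m: "S2 \<in> lmeasurable" unfolding S2_def
    by (rule bounded_set_imp_lmeasurable) (use bS S bounded_subset in auto)
  have der: "(?g has_field_derivative ?g' t) (at t within X)" for t X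
    by (auto intro!: derivative_eq_intros simp: algebra_simps)
  have cont: "continuous_on X ?g'" for X by (intro continuous_intros)
  have bd: "\<bar>?g' t\<bar> \<le> 2*M" if "t \<in> S" for t
  proof -
    have "t \<in> {c-M..c+M}" using sub that by auto
    then have "\<bar>c - t\<bar> \<le> M" by (simp add: abs_le_iff)
    then show ?thesis using \<sigma> by (auto simp: abs_mult)
  qed
  have sq: "(c-t)^2 = (c-s)^2" if "?g t = ?g s" for t s
    using that \<sigma> by auto
  have inj1: "inj_on ?g S1"
  proof (rule inj_onI)
    fix x y assume xy: "x \<in> S1" "y \<in> S1" and e: "?g x = ?g y"
    have "(c-x)^2 = (c-y)^2" by (rule sq[OF e])
    moreover have "c - x \<ge> 0" "c - y \<ge> 0" using xy by (auto simp: S1_def)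
    ultimately show "x = y" using power2_eq_iff_nonneg by fastforce
  qed
  have inj2: "inj_on ?g S2"
  proof (rule inj_onI)
    fix x y assume xy: "x \<in> S2" "y \<in> S2" and e: "?g x = ?g y"
    have "(x-c)^2 = (y-c)^2" using sq[OF e] by (simp add: power2_commute)
    moreover have "x - c \<ge> 0" "y - c \<ge> 0" using xy by (auto simp: S2_def)
    ultimately show "x = y" using power2_eq_iff_nonneg by fastforce
  qed
  have r1: "?g ` S1 \<in> lmeasurable \<and> measure lebesgue (?g ` S1) \<le> (2*M) * measure lebesgue S1"
    by (rule image_bound_inj[OF S1m der inj1 _ cont]) (use bd in \<open>auto simp: S1_def\<close>)
  have r2: "?g ` S2 \<in> lmeasurable \<and> measure lebesgue (?g ` S2) \<le> (2*M) * measure lebesgue S2"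
    by (rule image_bound_inj[OF S2m der inj2 _ cont]) (use bd in \<open>auto simp: S2_def\<close>)
  have SU: "S = S1 \<union> S2" and dj: "S1 \<inter> S2 = {}" by (auto simp: S1_def S2_def)
  have mS: "measure lebesgue S = measure lebesgue S1 + measure lebesgue S2"
    using measure_Un3[OF S1m S2m] dj SU by simp
  show ?thesis
  proof (intro exI conjI)
    show "?g ` S1 \<union> ?g ` S2 \<in> lmeasurable" using r1 r2 by auto
    show "?g ` S \<subseteq> ?g ` S1 \<union> ?g ` S2" using SU by auto
    have "measure lebesgue (?g ` S1 \<union> ?g ` S2) \<le> measure lebesgue (?g ` S1) + measure lebesgue (?g ` S2)"
      using r1 r2 by (intro measure_Un_le) (auto dest: fmeasurableD)
    also have "\<dots> \<le> 2*M*measure lebesgue S" using r1 r2 mS by (simp add: distrib_left)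
    finally show "measure lebesgue (?g ` S1 \<union> ?g ` S2) \<le> 2*M*measure lebesgue S" .
  qed
qed

lemma density_bounded:
  fixes A :: "real set" and \<eta> :: real
  assumes A: "A \<in> lmeasurable" "measure lebesgue A > 0" and \<eta>: "0 < \<eta>"
  shows "\<exists>a0 r. r > 0 \<and> (\<forall>d. 0 < d \<and> d \<le> r \<longrightarrow> measure lebesgue ({a0-d..a0+d} - A) \<le> \<eta>*(2*d))"
proof (rule ccontr)
  assume H: "\<not> ?thesis"
  have H': "\<exists>d. 0<d \<and> d \<le> r \<and> measure lebesgue ({a0-d..a0+d} - A) > \<eta>*(2*d)" if "r > 0" for a0 r
  proof -
    have "\<not> (\<forall>d. 0 < d \<and> d \<le> r \<longrightarrow> measure lebesgue ({a0-d..a0+d} - A) \<le> \<eta>*(2*d))"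
      using H that by blast
    then show ?thesis by (auto simp: not_le)
  qed
  have Al: "A \<in> sets lebesgue" using A by (simp add: fmeasurableD)
  have e0: "0 < \<eta> * measure lebesgue A" using A \<eta> by simp
  obtain W where W: "open W" "A \<subseteq> W" "W - A \<in> lmeasurable"
      and Oe: "emeasure lebesgue (W - A) < ennreal (\<eta> * measure lebesgue A)"
    using sets_lebesgue_outer_open[OF Al e0] by metis
  have OA: "W = A \<union> (W - A)" using W by auto
  have Ol: "W \<in> lmeasurable" using OA W(3) A(1) by (metis fmeasurable.Un)
  have mOA: "measure lebesgue (W - A) < \<eta> * measure lebesgue A"
    using Oe W(3) by (simp add: emeasure_eq_measure2 ennreal_less_iff)
  have mO: "measure lebesgue W \<le> measure lebesgue A + measure lebesgue (W - A)"
    using OA A(1) W(3) by (metis fmeasurableD measure_Un_le)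
  define K where "K = {(c,d). 0 < d \<and> cball c d \<subseteq> W \<and> measure lebesgue ({c-d..c+d} - A) > \<eta>*(2*d)}"
  have Kcov: "\<exists>i. i \<in> K \<and> x \<in> cball (fst i) (snd i) \<and> snd i < \<delta>" if "x \<in> A" "0 < \<delta>" for x \<delta>
  proof -
    have xW: "x \<in> W" using W(2) that(1) by blast
    obtain e where e: "e > 0" "ball x e \<subseteq> W" using open_contains_ball_eq[OF W(1)] xW by blast
    have r: "min (\<delta>/2) (e/2) > 0" using e(1) that(2) by simp
    obtain d where d: "0<d" "d \<le> min (\<delta>/2) (e/2)" "measure lebesgue ({x-d..x+d} - A) > \<eta>*(2*d)"
      using H'[OF r, of x] by blast
    have "cball x d \<subseteq> ball x e"
      using d(1,2) e(1) by (auto simp: subset_iff)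
    then have "cball x d \<subseteq> W" using e(2) by blast
    then have "(x,d) \<in> K" using d(1,3) unfolding K_def by blast
    moreover have "x \<in> cball x d" "d < \<delta>" using d(1,2) that(2) by auto
    ultimately show ?thesis by (intro exI[of _ "(x,d)"]) auto
  qed
  have Kpos: "0 < snd i" if "i \<in> K" for i using that by (auto simp: K_def split: prod.splits)
  obtain C where C: "countable C" "C \<subseteq> K"
     "pairwise (\<lambda>i j. disjnt (cball (fst i) (snd i)) (cball (fst j) (snd j))) C"
     "negligible(A - (\<Union>i \<in> C. cball (fst i) (snd i)))"
    using Vitali_covering_theorem_cballs[of K snd A fst, OF Kpos Kcov] by blast
  define X where "X i = cball (fst i) (snd i)" for i :: "real \<times> real"
  define U where "U = (\<Union>i \<in> C. X i)"
  have XK: "X i \<subseteq> W" "0 < snd i" "measure lebesgue (X i - A) > \<eta> * measure lebesgue (X i)" if "i \<in> C" for i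
  proof -
    obtain c d where i: "i = (c,d)" by fastforce
    with that C(2) have "(c,d) \<in> K" by auto
    then have "0 < d" "cball c d \<subseteq> W" "measure lebesgue ({c-d..c+d} - A) > \<eta>*(2*d)" by (auto simp: K_def)
    moreover have "measure lebesgue (cball c d) = 2*d" using \<open>0 < d\<close> by (simp add: cball_eq_atLeastAtMost)
    ultimately show "X i \<subseteq> W" "0 < snd i" "measure lebesgue (X i - A) > \<eta> * measure lebesgue (X i)"
      by (auto simp: X_def i cball_eq_atLeastAtMost)
  qed
  have Xl: "X i \<in> sets lebesgue" for i by (simp add: X_def)
  have UO: "U \<subseteq> W" using XK by (auto simp: U_def)
  have Us: "U \<in> sets lebesgue" unfolding U_def using C(1) Xl by (intro sets.countable_UN') auto
  have Ul: "U \<in> lmeasurable" using Ol UO Us by (rule fmeasurableI2)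
  have "U - A \<in> sets lebesgue" using Us Al by (rule sets.Diff)
  then have UAl: "U - A \<in> lmeasurable" using fmeasurableI2[OF Ul, of "U - A"] by blast
  have Xfl: "X i \<in> lmeasurable" for i unfolding X_def by (rule lmeasurable_cball)
  have XAl: "X i - A \<in> lmeasurable" for i
  proof -
    have "X i - A \<in> sets lebesgue" using Xl Al by (rule sets.Diff)
    then show ?thesis using fmeasurableI2[OF Xfl, of "X i - A"] by blast
  qed
  have dj: "disjoint_family_on X C" using C(3) by (auto simp: disjoint_family_on_def pairwise_def disjnt_def X_def)
  have dj2: "disjoint_family_on (\<lambda>i. X i - A) C" using dj unfolding disjoint_family_on_def by blast
  have "emeasure lebesgue (U - A) = emeasure lebesgue (\<Union>i\<in>C. X i - A)" by (simp add: U_def)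
  also have "\<dots> = (\<integral>\<^sup>+i. emeasure lebesgue (X i - A) \<partial>count_space C)"
    using C(1) dj2 Xl Al by (intro emeasure_UN_countable) auto
  also have "\<dots> \<ge> (\<integral>\<^sup>+i. ennreal \<eta> * emeasure lebesgue (X i) \<partial>count_space C)"
  proof (rule nn_integral_mono)
    fix i assume "i \<in> space (count_space C)"
    then have "i \<in> C" by simp
    then have "\<eta> * measure lebesgue (X i) \<le> measure lebesgue (X i - A)" using XK by fastforce
    then show "ennreal \<eta> * emeasure lebesgue (X i) \<le> emeasure lebesgue (X i - A)"
      using \<eta> by (simp add: emeasure_eq_measure2[OF Xfl] emeasure_eq_measure2[OF XAl] ennreal_mult'[symmetric])
  qed
  also have "(\<integral>\<^sup>+i. ennreal \<eta> * emeasure lebesgue (X i) \<partial>count_space C) = ennreal \<eta> * (\<integral>\<^sup>+i. emeasure lebesgue (X i) \<partial>count_space C)"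
    by (rule nn_integral_cmult) simp
  also have "(\<integral>\<^sup>+i. emeasure lebesgue (X i) \<partial>count_space C) = emeasure lebesgue U"
    unfolding U_def using C(1) dj Xl by (intro emeasure_UN_countable[symmetric]) auto
  finally have "ennreal \<eta> * emeasure lebesgue U \<le> emeasure lebesgue (U - A)" .
  then have mUA: "\<eta> * measure lebesgue U \<le> measure lebesgue (U - A)"
    using \<eta> by (simp add: emeasure_eq_measure2[OF Ul] emeasure_eq_measure2[OF UAl] ennreal_mult'[symmetric])
  have neg: "A - U \<in> null_sets lebesgue" using C(4) by (simp add: U_def X_def negligible_iff_null_sets)
  have mA: "measure lebesgue A = measure lebesgue (A \<inter> U)"
  proof -
    have "A \<inter> U = A - (A - U)" by auto
    then show ?thesis using measure_Diff_null_set[OF Al neg] by simp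
  qed
  have mU: "measure lebesgue U = measure lebesgue (A \<inter> U) + measure lebesgue (U - A)"
  proof -
    have "U = (A \<inter> U) \<union> (U - A)" by auto
    moreover have "A \<inter> U \<in> lmeasurable" using Ul Al by (intro fmeasurableI2[OF Ul]) auto
    moreover have "(A \<inter> U) \<inter> (U - A) = {}" by auto
    ultimately show ?thesis using measure_Un3[OF \<open>A \<inter> U \<in> lmeasurable\<close> UAl] by simp
  qed
  have "measure lebesgue U \<le> measure lebesgue W" using Ol UO Us by (intro measure_mono_fmeasurable) auto
  moreover have "measure lebesgue U \<ge> measure lebesgue A" using mA mU measure_nonneg[of lebesgue "U - A"] by linarith
  moreover then have "\<eta> * measure lebesgue U \<ge> \<eta> * measure lebesgue A" using \<eta> by (simp add: mult_left_mono)
  ultimately show False using mA mU mUA mOA mO by linarith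
qed

lemma density_pt:
  fixes A :: "real set" and \<eta> :: real
  assumes A: "A \<in> sets lebesgue" "emeasure lebesgue A > 0" and \<eta>: "0 < \<eta>"
  shows "\<exists>a0 r. r > 0 \<and> (\<forall>d. 0 < d \<and> d \<le> r \<longrightarrow> measure lebesgue ({a0-d..a0+d} - A) \<le> \<eta>*(2*d))"
proof -
  have "\<exists>n::nat. emeasure lebesgue (A \<inter> {-real n..real n}) \<noteq> 0"
  proof (rule ccontr)
    assume "\<not> ?thesis"
    then have z: "A \<inter> {-real n..real n} \<in> null_sets lebesgue" for n
      using A(1) by (auto simp: null_sets_def)
    have "A = (\<Union>n. A \<inter> {-real n..real n})"
    proof (intro equalityI subsetI)
      fix x assume "x \<in> A"
      obtain n :: nat where "\<bar>x\<bar> \<le> real n" using real_arch_simple by blast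
      then have "x \<in> A \<inter> {-real n..real n}" using \<open>x \<in> A\<close> by (auto simp: abs_le_iff)
      then show "x \<in> (\<Union>n. A \<inter> {-real n..real n})" by blast
    qed auto
    moreover have "(\<Union>n. A \<inter> {-real n..real n}) \<in> null_sets lebesgue"
      using z by (intro null_sets_UN) auto
    ultimately have "A \<in> null_sets lebesgue" by simp
    then show False using A(2) by (simp add: null_sets_def)
  qed
  then obtain n :: nat where n: "emeasure lebesgue (A \<inter> {-real n..real n}) \<noteq> 0" by blast
  define A' where "A' = A \<inter> {-real n..real n}"
  have Il: "{-real n..real n} \<in> lmeasurable" by simp
  have "A' \<in> sets lebesgue" unfolding A'_def using A(1) by (intro sets.Int) simp_all
  then have A'l: "A' \<in> lmeasurable" using fmeasurableI2[OF Il, of A'] by (auto simp: A'_def)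
  have "measure lebesgue A' > 0"
    using n A'l by (simp add: A'_def emeasure_eq_measure2 zero_less_measure_iff)
  then obtain a0 r where r: "r > 0" "\<And>d. 0 < d \<and> d \<le> r \<Longrightarrow> measure lebesgue ({a0-d..a0+d} - A') \<le> \<eta>*(2*d)"
    using density_bounded[OF A'l _ \<eta>] by blast
  show ?thesis
  proof (intro exI conjI allI impI)
    show "r > 0" by fact
    fix d assume d: "0 < d \<and> d \<le> r"
    have "measure lebesgue ({a0-d..a0+d} - A) \<le> measure lebesgue ({a0-d..a0+d} - A')"
    proof (rule measure_mono_fmeasurable)
      show "{a0-d..a0+d} - A \<subseteq> {a0-d..a0+d} - A'" by (auto simp: A'_def)
      show "{a0-d..a0+d} - A \<in> sets lebesgue" using A(1) by (intro sets.Diff) simp_all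
      have Jl: "{a0-d..a0+d} \<in> lmeasurable" by simp
      have "{a0-d..a0+d} - A' \<in> sets lebesgue" using A'l by (intro sets.Diff) (simp_all add: fmeasurableD)
      then show "{a0-d..a0+d} - A' \<in> lmeasurable" using fmeasurableI2[OF Jl, of "{a0-d..a0+d} - A'"] by blast
    qed
    also have "\<dots> \<le> \<eta>*(2*d)" using r(2) d by blast
    finally show "measure lebesgue ({a0-d..a0+d} - A) \<le> \<eta>*(2*d)" .
  qed
qed

lemma root_choice:
  fixes z u \<rho> :: real
  assumes "\<rho> > 0" "u \<ge> 0" "\<bar>u - z^2\<bar> \<le> \<rho>"
  shows "\<exists>t. t^2 = u \<and> \<bar>z - t\<bar> \<le> 2*\<rho>/max \<bar>z\<bar> (sqrt \<rho>)"
proof -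
  define s where "s = sqrt u"
  have s: "s \<ge> 0" "s^2 = u" using assms by (auto simp: s_def)
  have key: "\<bar>\<bar>z\<bar> - s\<bar> \<le> 2*\<rho>/max \<bar>z\<bar> (sqrt \<rho>)"
  proof (cases "\<bar>z\<bar> \<ge> sqrt \<rho>")
    case True
    have zp: "\<bar>z\<bar> > 0" using True assms(1) by (smt (verit) real_sqrt_gt_zero)
    have e1: "(\<bar>z\<bar> - s)*(\<bar>z\<bar>+s) = z^2 - u" using s by (simp add: algebra_simps power2_eq_square abs_mult_self_eq)
    have "\<bar>\<bar>z\<bar> - s\<bar> * (\<bar>z\<bar> + s) = \<bar>z^2 - u\<bar>"
      by (metis e1 abs_mult abs_of_nonneg add_nonneg_nonneg abs_ge_zero s(1))
    also have "\<dots> \<le> \<rho>" using assms(3) by (simp add: abs_minus_commute)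
    finally have "\<bar>\<bar>z\<bar> - s\<bar> * \<bar>z\<bar> \<le> \<rho>"
      using s(1) by (smt (verit) mult_left_mono abs_ge_zero distrib_left)
    then have "\<bar>\<bar>z\<bar> - s\<bar> \<le> \<rho> / \<bar>z\<bar>" using zp by (simp add: pos_le_divide_eq)
    also have "\<dots> \<le> 2*\<rho>/max \<bar>z\<bar> (sqrt \<rho>)" using True zp assms(1) by (simp add: max_def divide_right_mono)
    finally show ?thesis .
  next
    case False
    have "u \<le> z^2 + \<rho>" using assms(3) by (simp add: abs_le_iff)
    moreover have "\<bar>z\<bar>^2 \<le> (sqrt \<rho>)^2" using power_mono[of "\<bar>z\<bar>" "sqrt \<rho>" 2] False by simp
    then have "z^2 \<le> \<rho>" using assms(1) by simp
    ultimately have "u \<le> 4*\<rho>" using assms(1) by linarith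
    then have "s \<le> sqrt (4*\<rho>)" unfolding s_def by (rule real_sqrt_le_mono)
    also have "sqrt (4*\<rho>) = 2 * sqrt \<rho>" by (simp add: real_sqrt_mult)
    finally have "s \<le> 2 * sqrt \<rho>" .
    moreover have "max \<bar>z\<bar> (sqrt \<rho>) = sqrt \<rho>" using False by simp
    then have "2*\<rho>/max \<bar>z\<bar> (sqrt \<rho>) = 2 * sqrt \<rho>"
      using assms(1) real_div_sqrt[of \<rho>] by simp
    ultimately show ?thesis using False s(1) by (simp add: abs_le_iff)
  qed
  show ?thesis
  proof (cases "z \<ge> 0")
    case True
    then show ?thesis using key s by (intro exI[of _ s]) auto
  next
    case False
    then show ?thesis using key s by (intro exI[of _ "-s"]) auto
  qed
qed

lemma d_bounds:
  fixes z \<rho> :: real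
  assumes "\<rho> > 0"
  defines "d \<equiv> 2*\<rho>/max \<bar>z\<bar> (sqrt \<rho>)"
  shows "d > 0" "d \<le> 2 * sqrt \<rho>" "(\<bar>z\<bar> + d) * d \<le> 6*\<rho>"
proof -
  have sp: "sqrt \<rho> > 0" using assms by simp
  have mp: "max \<bar>z\<bar> (sqrt \<rho>) \<ge> sqrt \<rho>" by simp
  then have mpos: "max \<bar>z\<bar> (sqrt \<rho>) > 0" using sp by linarith
  show "d > 0" unfolding d_def using assms mpos by simp
  have "d \<le> 2*\<rho>/sqrt \<rho>" unfolding d_def
    by (rule divide_left_mono) (use assms mp sp mpos in \<open>auto intro!: mult_pos_pos\<close>)
  also have "2*\<rho>/sqrt \<rho> = 2 * sqrt \<rho>"
  proof -
    have "\<rho> / sqrt \<rho> = sqrt \<rho>" using \<open>\<rho> > 0\<close> real_div_sqrt[of \<rho>] by simp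
    then show ?thesis by (metis times_divide_eq_right)
  qed
  finally show d2: "d \<le> 2 * sqrt \<rho>" .
  have dm: "d * max \<bar>z\<bar> (sqrt \<rho>) = 2*\<rho>" unfolding d_def using mpos by simp
  have "(\<bar>z\<bar> + d) * d = \<bar>z\<bar> * d + d * d" by (simp add: algebra_simps)
  also have "\<bar>z\<bar> * d \<le> 2*\<rho>" using dm \<open>d > 0\<close>
    by (metis max.cobounded1 mult.commute mult_right_mono less_imp_le)
  also have "d * d \<le> (2 * sqrt \<rho>) * (2 * sqrt \<rho>)" using d2 \<open>d > 0\<close> \<open>\<rho> > 0\<close> by (intro mult_mono) auto
  also have "(2 * sqrt \<rho>) * (2 * sqrt \<rho>) = 4 * \<rho>" using assms by simp
  finally show "(\<bar>z\<bar> + d) * d \<le> 6*\<rho>" by simp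
qed

lemma J_props:
  fixes c c' \<rho> m u :: real
  assumes "c \<ge> 0" "c' \<le> 1" "\<bar>c - c'\<bar> \<le> \<rho>/4" "0 < \<rho>" "\<rho> \<le> 1"
    and m: "m = min (max (c - \<rho>/2) 0) (1 - \<rho>/2)" and u: "m \<le> u" "u \<le> m + \<rho>/2"
  shows "0 \<le> u" "u \<le> 1" "\<bar>u - c\<bar> \<le> \<rho>" "\<bar>u - c'\<bar> \<le> \<rho>"
proof -
  have h: "c - c' \<le> \<rho>/4" "c' - c \<le> \<rho>/4" using assms(3) unfolding abs_le_iff by linarith+
  have mc: "(m = 0 \<and> c \<le> \<rho>/2) \<or> (m = c - \<rho>/2 \<and> c \<ge> \<rho>/2 \<and> c - \<rho>/2 \<le> 1 - \<rho>/2) \<or> (m = 1 - \<rho>/2 \<and> c - \<rho>/2 \<ge> 1 - \<rho>/2)"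
    using m assms(4,5) by (auto simp: min_def max_def)
  show "0 \<le> u" "u \<le> 1" "\<bar>u - c\<bar> \<le> \<rho>" "\<bar>u - c'\<bar> \<le> \<rho>"
    using mc u h assms(1,2,4,5) unfolding abs_le_iff by auto
qed




lemma norm2: "norm (x::real^2) = sqrt ((x$1)^2 + (x$2)^2)"
  by (simp add: norm_eq_sqrt_inner inner_vec_def sum_2 power2_eq_square)

theorem mainTheorem3:
  fixes A B :: "real set"
  assumes "A \<in> sets lebesgue" and "emeasure lebesgue A > 0"
      and "B \<in> sets lebesgue" and "emeasure lebesgue B > 0"
  shows "\<exists>(p :: real^2) (\<epsilon>::real). \<epsilon> > 0 \<and>
           {x :: real^2. 1 - \<epsilon> < norm (x - p) \<and> norm (x - p) < 1 + \<epsilon>}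
             \<subseteq> {u + v | u v. u \<in> (\<lambda>(a,b). vector [a, b]) ` (A \<times> B) \<and> v \<in> sphere 0 1}"
proof -
  define \<eta> :: real where "\<eta> = 1/200"
  have \<eta>0: "\<eta> > 0" by (simp add: \<eta>_def)
  obtain a0 rA where rA: "rA > 0" "\<And>d. 0<d \<and> d \<le> rA \<Longrightarrow> measure lebesgue ({a0-d..a0+d} - A) \<le> \<eta>*(2*d)"
    using density_pt[OF assms(1,2) \<eta>0] by blast
  obtain b0 rB where rB: "rB > 0" "\<And>d. 0<d \<and> d \<le> rB \<Longrightarrow> measure lebesgue ({b0-d..b0+d} - B) \<le> \<eta>*(2*d)"
    using density_pt[OF assms(3,4) \<eta>0] by blast
  define r0 where "r0 = min (min rA rB) (1/2)"
  have r0: "r0 > 0" "r0 \<le> rA" "r0 \<le> rB" "r0 \<le> 1/2" using rA rB by (auto simp: r0_def)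
  define \<rho> where "\<rho> = r0^2/4"
  have \<rho>0: "\<rho> > 0" using r0 by (simp add: \<rho>_def)
  have "r0^2 \<le> (1/2)^2" using r0 by (intro power_mono) auto
  then have "r0^2 \<le> 4" by (simp add: power2_eq_square)
  then have \<rho>1: "\<rho> \<le> 1" by (simp add: \<rho>_def)
  have sq\<rho>: "2 * sqrt \<rho> = r0"
  proof -
    have "sqrt \<rho> = sqrt (r0^2) / sqrt 4" by (simp add: \<rho>_def real_sqrt_divide)
    also have "\<dots> = r0 / 2" using r0(1) by simp
    finally show ?thesis by simp
  qed
  define \<epsilon> where "\<epsilon> = \<rho>/12"
  have \<epsilon>0: "\<epsilon> > 0" "\<epsilon> \<le> 1" using \<rho>0 \<rho>1 by (auto simp: \<epsilon>_def)
  define p :: "real^2" where "p = vector [a0, b0]"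
  show ?thesis
  proof (intro exI conjI)
    show "\<epsilon> > 0" by fact
    show "{x :: real^2. 1 - \<epsilon> < norm (x - p) \<and> norm (x - p) < 1 + \<epsilon>}
             \<subseteq> {u + v | u v. u \<in> (\<lambda>(a,b). vector [a, b]) ` (A \<times> B) \<and> v \<in> sphere 0 1}"
    proof
      fix x :: "real^2"
      assume "x \<in> {x :: real^2. 1 - \<epsilon> < norm (x - p) \<and> norm (x - p) < 1 + \<epsilon>}"
      then have xn: "1 - \<epsilon> < norm (x - p)" "norm (x - p) < 1 + \<epsilon>" by auto
      define z1 where "z1 = x$1 - a0"
      define z2 where "z2 = x$2 - b0"
      define N where "N = norm (x - p)"
      have N2: "N^2 = z1^2 + z2^2"
        by (simp add: N_def norm2 p_def z1_def z2_def)
      have N0: "N \<ge> 0" by (simp add: N_def)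
      have "N^2 < (1+\<epsilon>)^2" using power_strict_mono[of N "1+\<epsilon>" 2] N0 xn by (simp add: N_def)
      moreover have "(1-\<epsilon>)^2 < N^2" using power_strict_mono[of "1-\<epsilon>" N 2] \<epsilon>0 xn by (simp add: N_def)
      ultimately have hh: "N*N < 1 + 2*\<epsilon> + \<epsilon>*\<epsilon>" "1 - 2*\<epsilon> + \<epsilon>*\<epsilon> < N*N"
        by (simp_all add: power2_eq_square algebra_simps)
      have ee: "\<epsilon>*\<epsilon> \<le> \<epsilon>" "0 \<le> \<epsilon>*\<epsilon>" using \<epsilon>0 by (simp_all add: mult_left_le_one_le)
      have h: "N^2 \<le> 1 + 3*\<epsilon>" "N^2 \<ge> 1 - 3*\<epsilon>"
        using hh ee unfolding power2_eq_square by linarith+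
      have zz: "\<bar>z1^2 + z2^2 - 1\<bar> \<le> \<rho>/4"
        using N2 h \<epsilon>_def unfolding abs_le_iff by linarith
      define c where "c = z1^2"
      define c' where "c' = 1 - z2^2"
      define d where "d = 2*\<rho>/max \<bar>z1\<bar> (sqrt \<rho>)"
      define e where "e = 2*\<rho>/max \<bar>z2\<bar> (sqrt \<rho>)"
      have dB: "d > 0" "d \<le> r0" "(\<bar>z1\<bar> + d) * d \<le> 6*\<rho>"
        using d_bounds[OF \<rho>0, of z1] sq\<rho> by (auto simp: d_def)
      have eB: "e > 0" "e \<le> r0" "(\<bar>z2\<bar> + e) * e \<le> 6*\<rho>"
        using d_bounds[OF \<rho>0, of z2] sq\<rho> by (auto simp: e_def)
      define SA where "SA = {a0-d..a0+d} - A"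
      define SB where "SB = {b0-e..b0+e} - B"
      have mSA: "measure lebesgue SA \<le> \<eta>*(2*d)" unfolding SA_def using rA(2) dB r0 by auto
      have mSB: "measure lebesgue SB \<le> \<eta>*(2*e)" unfolding SB_def using rB(2) eB r0 by auto
      have SAl: "SA \<in> sets lebesgue" unfolding SA_def using assms(1) by (intro sets.Diff) simp_all
      have SBl: "SB \<in> sets lebesgue" unfolding SB_def using assms(3) by (intro sets.Diff) simp_all
      have SAsub: "SA \<subseteq> {x$1 - (\<bar>z1\<bar>+d)..x$1 + (\<bar>z1\<bar>+d)}"
        by (auto simp: SA_def z1_def abs_le_iff)
      have SBsub: "SB \<subseteq> {x$2 - (\<bar>z2\<bar>+e)..x$2 + (\<bar>z2\<bar>+e)}"
        by (auto simp: SB_def z2_def abs_le_iff)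
      obtain TA where TA: "TA \<in> lmeasurable" "(\<lambda>t. 0 + 1*(x$1-t)^2) ` SA \<subseteq> TA"
          "measure lebesgue TA \<le> 2*(\<bar>z1\<bar>+d)*measure lebesgue SA"
        using sq_image_bound[OF SAl SAsub, of 1 0] by auto
      obtain TB where TB: "TB \<in> lmeasurable" "(\<lambda>t. 1 + (-1)*(x$2-t)^2) ` SB \<subseteq> TB"
          "measure lebesgue TB \<le> 2*(\<bar>z2\<bar>+e)*measure lebesgue SB"
        using sq_image_bound[OF SBl SBsub, of "-1" 1] by auto
      have "measure lebesgue TA \<le> 2*(\<bar>z1\<bar>+d)*(\<eta>*(2*d))"
        using TA(3) mSA dB(1) by (smt (verit) abs_ge_zero mult_left_mono)
      also have "\<dots> = 4*\<eta>*((\<bar>z1\<bar>+d)*d)" by (simp add: algebra_simps)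
      also have "\<dots> \<le> 4*\<eta>*(6*\<rho>)" using dB(3) \<eta>0 by (intro mult_left_mono) auto
      finally have mTA: "measure lebesgue TA \<le> 24*\<eta>*\<rho>" by simp
      have "measure lebesgue TB \<le> 2*(\<bar>z2\<bar>+e)*(\<eta>*(2*e))"
        using TB(3) mSB eB(1) by (smt (verit) abs_ge_zero mult_left_mono)
      also have "\<dots> = 4*\<eta>*((\<bar>z2\<bar>+e)*e)" by (simp add: algebra_simps)
      also have "\<dots> \<le> 4*\<eta>*(6*\<rho>)" using eB(3) \<eta>0 by (intro mult_left_mono) auto
      finally have mTB: "measure lebesgue TB \<le> 24*\<eta>*\<rho>" by simp
      define m where "m = min (max (c - \<rho>/2) 0) (1 - \<rho>/2)"
      have "\<not> {m..m+\<rho>/2} \<subseteq> TA \<union> TB"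
      proof
        assume sub: "{m..m+\<rho>/2} \<subseteq> TA \<union> TB"
        have "measure lebesgue {m..m+\<rho>/2} \<le> measure lebesgue (TA \<union> TB)"
          using sub TA(1) TB(1) by (intro measure_mono_fmeasurable) auto
        also have "\<dots> \<le> measure lebesgue TA + measure lebesgue TB"
          using TA(1) TB(1) by (intro measure_Un_le) (auto dest: fmeasurableD)
        finally show False using mTA mTB \<rho>0 by (simp add: \<eta>_def)
      qed
      then obtain u where "u \<in> {m..m+\<rho>/2}" "u \<notin> TA \<union> TB" by blast
      then have u: "m \<le> u" "u \<le> m + \<rho>/2" "u \<notin> TA" "u \<notin> TB" by auto
      have "c - c' = z1^2 + z2^2 - 1" by (simp add: c_def c'_def)
      then have c3: "\<bar>c - c'\<bar> \<le> \<rho>/4" using zz by simp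
      have cc: "c \<ge> 0" "c' \<le> 1" "\<bar>c - c'\<bar> \<le> \<rho>/4" using c3 by (auto simp: c_def c'_def)
      note up = J_props[OF cc \<rho>0 \<rho>1 m_def u(1,2)]
      obtain t where t: "t^2 = u" "\<bar>z1 - t\<bar> \<le> d"
        using root_choice[OF \<rho>0 up(1), of z1] up(3) by (auto simp: c_def d_def abs_minus_commute)
      have u1: "1 - u \<ge> 0" using up(2) by simp
      have "\<bar>(1 - u) - z2^2\<bar> \<le> \<rho>" using up(4) by (simp add: c'_def abs_minus_commute algebra_simps)
      then obtain s where s: "s^2 = 1 - u" "\<bar>z2 - s\<bar> \<le> e"
        using root_choice[OF \<rho>0 u1, of z2] by (auto simp: e_def)
      define a where "a = x$1 - t"
      define b where "b = x$2 - s"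
      have aI: "a \<in> {a0-d..a0+d}" using t(2) by (auto simp: a_def z1_def abs_le_iff)
      have bI: "b \<in> {b0-e..b0+e}" using s(2) by (auto simp: b_def z2_def abs_le_iff)
      have aA: "a \<in> A"
      proof (rule ccontr)
        assume "a \<notin> A"
        then have "a \<in> SA" using aI by (simp add: SA_def)
        then have "0 + 1*(x$1-a)^2 \<in> TA" using TA(2) by blast
        then show False using u(3) t(1) by (simp add: a_def)
      qed
      have bB: "b \<in> B"
      proof (rule ccontr)
        assume "b \<notin> B"
        then have "b \<in> SB" using bI by (simp add: SB_def)
        then have "1 + (-1)*(x$2-b)^2 \<in> TB" using TB(2) by blast
        then show False using u(4) s(1) by (simp add: b_def)
      qed
      have vn: "norm (x - vector [a, b]) = 1"
        using t(1) s(1) by (simp add: norm2 a_def b_def)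
      show "x \<in> {u + v | u v. u \<in> (\<lambda>(a,b). vector [a, b]) ` (A \<times> B) \<and> v \<in> sphere 0 1}"
      proof (intro CollectI exI conjI)
        show "x = vector [a, b] + (x - vector [a, b])" by simp
        show "vector [a, b] \<in> (\<lambda>(a,b). vector [a, b]) ` (A \<times> B)" using aA bB by force
        show "x - vector [a, b] \<in> sphere 0 1" using vn by simp
      qed
    qed
  qed
qed


end
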